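(* Let $G_i$ be a graph of order $n_i$, minimum degree $\delta_i$ and maximum degree $\Delta_i$, $i\in\{1,2\}$. Let $k_i\in\{2-\Delta_i,\dots,\Delta_i\}$ for $i\in\{1,2\}$ and let $k'=\max\{k_1-\delta_2,\;k_2-\delta_1,\;\min\{k_2+\Delta_1,\,k_1+\Delta_2\}\}$. Then for every integer $k\in\{k',\dots,\Delta_1+\Delta_2\}$, $$\phi_k^o(G_1\times G_2)\ge n_1\phi_{k_2}^o(G_2)+n_2\phi_{k_1}^o(G_1)-\phi_{k_1}^o(G_1)\phi_{k_2}^o(G_2).$$
   Context: All graphs are finite and simple. For a graph $G=(V,E)$, a set $S\subseteq V$ and $v\in V$, let $\delta_S(v)=|\{u\in S: uv\in E\}|$, $\overline{S}=V\setminus S$, and let $\partial S$ be the set of vertices of $\overline S$ adjacent to at least one vertex of $S$. For an integer $k$, a non-empty set $S\subseteq V$ is an offensive $k$-alliance if $\delta_S(v)\ge \delta_{\overline S}(v)+k$ for every $v\in \partial S$. A set $X\subseteq V$ is an offensive $k$-alliance free set ($k$-oaf set) if no offensive $k$-alliance $S$ satisfies $S\subseteq X$. $\phi_k^o(G)$ denotes the maximum cardinality of a $k$-oaf set in $G$. The Cartesian product $G_1\times G_2$ of $G_1=(V_1,E_1)$, $G_2=(V_2,E_2)$ has vertex set $V_1\times V_2$, with $(a,b)$ adjacent to $(c,d)$ iff either $a=c$ and $bd\in E_2$, or $b=d$ and $ac\in E_1$. *)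

theory Defs
  imports Main
begin

definition graph :: "'a set \<Rightarrow> ('a \<Rightarrow> 'a \<Rightarrow> bool) \<Rightarrow> bool" where
  "graph V E \<longleftrightarrow> finite V \<and> (\<forall>u v. E u v \<longrightarrow> u \<in> V \<and> v \<in> V) \<and>
     (\<forall>u v. E u v \<longrightarrow> E v u) \<and> (\<forall>v. \<not> E v v)"

definition deg :: "'a set \<Rightarrow> ('a \<Rightarrow> 'a \<Rightarrow> bool) \<Rightarrow> 'a \<Rightarrow> nat" where
  "deg V E v = card {u \<in> V. E v u}"

definition min_deg :: "'a set \<Rightarrow> ('a \<Rightarrow> 'a \<Rightarrow> bool) \<Rightarrow> nat" where
  "min_deg V E = Min (deg V E ` V)"

definition max_deg :: "'a set \<Rightarrow> ('a \<Rightarrow> 'a \<Rightarrow> bool) \<Rightarrow> nat" where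
  "max_deg V E = Max (deg V E ` V)"

definition deltaS :: "('a \<Rightarrow> 'a \<Rightarrow> bool) \<Rightarrow> 'a set \<Rightarrow> 'a \<Rightarrow> nat" where
  "deltaS E S v = card {u \<in> S. E u v}"

definition boundary :: "'a set \<Rightarrow> ('a \<Rightarrow> 'a \<Rightarrow> bool) \<Rightarrow> 'a set \<Rightarrow> 'a set" where
  "boundary V E S = {v \<in> V - S. \<exists>u \<in> S. E u v}"

definition off_alliance :: "'a set \<Rightarrow> ('a \<Rightarrow> 'a \<Rightarrow> bool) \<Rightarrow> int \<Rightarrow> 'a set \<Rightarrow> bool" where
  "off_alliance V E k S \<longleftrightarrow> S \<subseteq> V \<and> S \<noteq> {} \<and>
     (\<forall>v \<in> boundary V E S. int (deltaS E S v) \<ge> int (deltaS E (V - S) v) + k)"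

definition oaf :: "'a set \<Rightarrow> ('a \<Rightarrow> 'a \<Rightarrow> bool) \<Rightarrow> int \<Rightarrow> 'a set \<Rightarrow> bool" where
  "oaf V E k X \<longleftrightarrow> X \<subseteq> V \<and> (\<forall>S. off_alliance V E k S \<longrightarrow> \<not> S \<subseteq> X)"

definition phi_o :: "'a set \<Rightarrow> ('a \<Rightarrow> 'a \<Rightarrow> bool) \<Rightarrow> int \<Rightarrow> nat" where
  "phi_o V E k = Max (card ` {X. oaf V E k X})"

definition cart_edge :: "('a \<Rightarrow> 'a \<Rightarrow> bool) \<Rightarrow> ('b \<Rightarrow> 'b \<Rightarrow> bool) \<Rightarrow> ('a \<times> 'b) \<Rightarrow> ('a \<times> 'b) \<Rightarrow> bool" where
  "cart_edge E1 E2 x y \<longleftrightarrow>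
     (fst x = fst y \<and> E2 (snd x) (snd y)) \<or> (snd x = snd y \<and> E1 (fst x) (fst y))"

end

theory Submission
  imports Defs
begin


lemma finite_row: "finite T \<Longrightarrow> finite {y. (a,y)\<in>T}"
  using finite_vimageI[of T "Pair a"] by (simp add: vimage_def inj_on_def)
lemma finite_col: "finite T \<Longrightarrow> finite {x. (x,b)\<in>T}"
  using finite_vimageI[of T "\<lambda>x. (x,b)"] by (simp add: vimage_def inj_on_def)

lemma delta_prod:
  assumes irr: "\<forall>v. \<not> Eb v v" and fin: "finite T"
  shows "deltaS (cart_edge Ea Eb) T (a,b) = deltaS Eb {y. (a,y)\<in>T} b + deltaS Ea {x. (x,b)\<in>T} a"
proof -
  have eq: "{u \<in> T. cart_edge Ea Eb u (a,b)} = Pair a ` {y \<in> {y. (a,y)\<in>T}. Eb y b} \<union> (\<lambda>x. (x,b)) ` {x \<in> {x. (x,b)\<in>T}. Ea x a}"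
    by (auto simp: cart_edge_def)
  have dis: "Pair a ` {y \<in> {y. (a,y)\<in>T}. Eb y b} \<inter> (\<lambda>x. (x,b)) ` {x \<in> {x. (x,b)\<in>T}. Ea x a} = {}"
    using irr by auto
  have f1: "finite {y \<in> {y. (a,y)\<in>T}. Eb y b}" using finite_row[OF fin, of a] by simp
  have f2: "finite {x \<in> {x. (x,b)\<in>T}. Ea x a}" using finite_col[OF fin, of b] by simp
  show ?thesis unfolding deltaS_def eq
    apply (subst card_Un_disjoint)
    using f1 f2 dis apply auto[3]
    apply (subst card_image, simp add: inj_on_def)
    apply (subst card_image, simp add: inj_on_def)
    by simp
qed

lemma delta_mono: "finite B \<Longrightarrow> A \<subseteq> B \<Longrightarrow> deltaS E A v \<le> deltaS E B v"
  unfolding deltaS_def by (rule card_mono) auto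

lemma delta_le_deg: assumes "graph V E" "C \<subseteq> V" shows "deltaS E C v \<le> deg V E v"
proof -
  have "finite V" using assms unfolding graph_def by auto
  then show ?thesis unfolding deltaS_def deg_def
    apply (intro card_mono) using assms unfolding graph_def by auto
qed

lemma delta_V_deg: assumes "graph V E" shows "deltaS E V v = deg V E v"
  unfolding deltaS_def deg_def using assms unfolding graph_def
  by (intro arg_cong[where f=card]) blast

lemma deg_le_max: "graph V E \<Longrightarrow> v \<in> V \<Longrightarrow> deg V E v \<le> max_deg V E"
  unfolding max_deg_def graph_def by auto
lemma deg_ge_min: "graph V E \<Longrightarrow> v \<in> V \<Longrightarrow> min_deg V E \<le> deg V E v"
  unfolding min_deg_def graph_def by auto

lemma oaf_sub: "oaf V E k X \<Longrightarrow> X \<subseteq> V"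
  unfolding oaf_def by (elim conjE)

lemma oaf_fin: assumes "finite V" shows "finite {X. oaf V E k X}"
proof (rule finite_subset[of _ "Pow V"])
  show "{X. oaf V E k X} \<subseteq> Pow V" using oaf_sub by blast
  show "finite (Pow V)" using assms by simp
qed

lemma oaf_empty: "oaf V E k {}"
  unfolding oaf_def off_alliance_def by blast

lemma phi_attained: assumes "graph V E" shows "\<exists>X. oaf V E k X \<and> card X = phi_o V E k"
proof -
  have fin: "finite {X. oaf V E k X}" using assms unfolding graph_def by (intro oaf_fin) blast
  have ne: "card ` {X. oaf V E k X} \<noteq> {}" using oaf_empty[of V E k] by auto
  have "phi_o V E k \<in> card ` {X. oaf V E k X}" unfolding phi_o_def
    using fin ne by (intro Max_in) simp_all
  then obtain X where "X \<in> {X. oaf V E k X}" "phi_o V E k = card X" by (rule imageE)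
  then show ?thesis by auto
qed


lemma phi_ge: assumes "finite V" "oaf V E k X" shows "card X \<le> phi_o V E k"
proof -
  have fin: "finite {X. oaf V E k X}" using oaf_fin[OF assms(1)] .
  have "card X \<in> card ` {X. oaf V E k X}" using assms(2) by blast
  then show ?thesis unfolding phi_o_def using fin by (intro Max_ge) simp_all
qed


theorem corollary4:
  fixes V1 :: "'a set" and E1 :: "'a \<Rightarrow> 'a \<Rightarrow> bool"
    and V2 :: "'b set" and E2 :: "'b \<Rightarrow> 'b \<Rightarrow> bool"
    and k1 k2 k :: int
  assumes g1: "graph V1 E1" and g2: "graph V2 E2"
    and ne1: "V1 \<noteq> {}" and ne2: "V2 \<noteq> {}"
    and k1: "2 - int (max_deg V1 E1) \<le> k1" "k1 \<le> int (max_deg V1 E1)"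
    and k2: "2 - int (max_deg V2 E2) \<le> k2" "k2 \<le> int (max_deg V2 E2)"
    and klo: "max (k1 - int (min_deg V2 E2))
                (max (k2 - int (min_deg V1 E1))
                     (min (k2 + int (max_deg V1 E1)) (k1 + int (max_deg V2 E2)))) \<le> k"
    and khi: "k \<le> int (max_deg V1 E1) + int (max_deg V2 E2)"
  shows "int (phi_o (V1 \<times> V2) (cart_edge E1 E2) k) \<ge>
           int (card V1) * int (phi_o V2 E2 k2) + int (card V2) * int (phi_o V1 E1 k1)
           - int (phi_o V1 E1 k1) * int (phi_o V2 E2 k2)"
proof -
  define V where "V = V1 \<times> V2"
  define CE where "CE = cart_edge E1 E2"
  have f1: "finite V1" and f2: "finite V2" using g1 g2 unfolding graph_def by auto
  have fV: "finite V" unfolding V_def using f1 f2 by simp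
  have irr2: "\<forall>v. \<not> E2 v v" using g2 unfolding graph_def by auto
  have sym1: "\<And>u v. E1 u v \<Longrightarrow> E1 v u" and sym2: "\<And>u v. E2 u v \<Longrightarrow> E2 v u"
    using g1 g2 unfolding graph_def by auto
  have in1: "\<And>u v. E1 u v \<Longrightarrow> u \<in> V1 \<and> v \<in> V1" and in2: "\<And>u v. E2 u v \<Longrightarrow> u \<in> V2 \<and> v \<in> V2"
    using g1 g2 unfolding graph_def by auto
  obtain X1 where X1: "oaf V1 E1 k1 X1" "card X1 = phi_o V1 E1 k1" using phi_attained[OF g1] by blast
  obtain X2 where X2: "oaf V2 E2 k2 X2" "card X2 = phi_o V2 E2 k2" using phi_attained[OF g2] by blast
  have X1V: "X1 \<subseteq> V1" and X2V: "X2 \<subseteq> V2" using oaf_sub[OF X1(1)] oaf_sub[OF X2(1)] by auto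
  define X where "X = X1 \<times> V2 \<union> V1 \<times> X2"
  have dec: "deltaS CE T (a,b) = deltaS E2 {y. (a,y)\<in>T} b + deltaS E1 {x. (x,b)\<in>T} a"
    if "T \<subseteq> V" for T a b
    unfolding CE_def using delta_prod[where Eb=E2 and Ea=E1, OF irr2 finite_subset[OF that fV]] .
  have kA: "k1 - int (min_deg V2 E2) \<le> k" and kB: "k2 - int (min_deg V1 E1) \<le> k"
    using klo by simp_all
  have noall: False if S: "off_alliance V CE k S" "S \<subseteq> X" for S
  proof -
    have SV: "S \<subseteq> V" "S \<noteq> {}" and al: "\<And>v. v \<in> boundary V CE S \<Longrightarrow> int (deltaS CE S v) \<ge> int (deltaS CE (V - S) v) + k"
      using S(1) unfolding off_alliance_def by auto
    have VS: "V - S \<subseteq> V" by auto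
    have argA: False if A: "fst ` S \<subseteq> X1" and kk: "k1 - int (min_deg V2 E2) \<le> k"
    proof -
      define A where "A = fst ` S"
      have "\<not> off_alliance V1 E1 k1 A" using X1(1) A unfolding oaf_def A_def by blast
      moreover have "A \<subseteq> V1" "A \<noteq> {}" using SV unfolding A_def V_def by auto
      ultimately obtain a where a: "a \<in> boundary V1 E1 A" "int (deltaS E1 A a) < int (deltaS E1 (V1 - A) a) + k1"
        unfolding off_alliance_def by force
      then obtain a' where a': "a' \<in> A" "E1 a' a" "a \<in> V1" "a \<notin> A" unfolding boundary_def by auto
      then obtain b where b: "(a',b) \<in> S" unfolding A_def by auto
      have bV: "b \<in> V2" using b SV unfolding V_def by auto
      have abnS: "(a,b) \<notin> S" using a' unfolding A_def by force
      have bd: "(a,b) \<in> boundary V CE S" unfolding boundary_def V_def CE_def cart_edge_def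
        using abnS a' bV b by (auto intro!: bexI[of _ "(a',b)"])
      have abV: "(a,b) \<in> V" unfolding V_def using a' bV by auto
      have r1: "{y. (a,y)\<in>S} = {}" using abnS a' unfolding A_def by force
      have r2: "{y. (a,y)\<in>V-S} = V2" using r1 a' unfolding V_def by auto
      have c1: "{x. (x,b)\<in>S} \<subseteq> A" unfolding A_def by force
      have c2: "V1 - A \<subseteq> {x. (x,b)\<in>V-S}" unfolding A_def V_def using bV by force
      have "deltaS E1 {x. (x,b)\<in>S} a \<le> deltaS E1 A a"
        using delta_mono[OF finite_subset[OF \<open>A \<subseteq> V1\<close> f1] c1] .
      moreover have "deltaS E1 (V1 - A) a \<le> deltaS E1 {x. (x,b)\<in>V-S} a"
        using delta_mono[OF finite_col[OF finite_subset[OF VS fV]] c2] .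
      moreover have "deltaS E2 {} b = 0" unfolding deltaS_def by simp
      moreover have "deltaS E2 V2 b \<ge> min_deg V2 E2"
        using delta_V_deg[OF g2] deg_ge_min[OF g2 bV] by simp
      moreover note al[OF bd] dec[OF SV(1), of a b, unfolded r1] dec[OF VS, of a b, unfolded r2] a(2) kk
      ultimately show False by linarith
    qed
    have argB: False if A: "snd ` S \<subseteq> X2" and kk: "k2 - int (min_deg V1 E1) \<le> k"
    proof -
      define A where "A = snd ` S"
      have "\<not> off_alliance V2 E2 k2 A" using X2(1) A unfolding oaf_def A_def by blast
      moreover have "A \<subseteq> V2" "A \<noteq> {}" using SV unfolding A_def V_def by auto
      ultimately obtain b where a: "b \<in> boundary V2 E2 A" "int (deltaS E2 A b) < int (deltaS E2 (V2 - A) b) + k2"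
        unfolding off_alliance_def by force
      then obtain b' where a': "b' \<in> A" "E2 b' b" "b \<in> V2" "b \<notin> A" unfolding boundary_def by auto
      then obtain a where b: "(a,b') \<in> S" unfolding A_def by force
      have bV: "a \<in> V1" using b SV unfolding V_def by auto
      have abnS: "(a,b) \<notin> S" using a' unfolding A_def by force
      have bd: "(a,b) \<in> boundary V CE S" unfolding boundary_def V_def CE_def cart_edge_def
        using abnS a' bV b by (auto intro!: bexI[of _ "(a,b')"])
      have r1: "{x. (x,b)\<in>S} = {}" using abnS a' unfolding A_def by force
      have r2: "{x. (x,b)\<in>V-S} = V1" using r1 a' unfolding V_def by auto
      have c1: "{y. (a,y)\<in>S} \<subseteq> A" unfolding A_def by force
      have c2: "V2 - A \<subseteq> {y. (a,y)\<in>V-S}" unfolding A_def V_def using bV by force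
      have "deltaS E2 {y. (a,y)\<in>S} b \<le> deltaS E2 A b"
        using delta_mono[OF finite_subset[OF \<open>A \<subseteq> V2\<close> f2] c1] .
      moreover have "deltaS E2 (V2 - A) b \<le> deltaS E2 {y. (a,y)\<in>V-S} b"
        using delta_mono[OF finite_row[OF finite_subset[OF VS fV]] c2] .
      moreover have "deltaS E1 {} a = 0" unfolding deltaS_def by simp
      moreover have "deltaS E1 V1 a \<ge> min_deg V1 E1"
        using delta_V_deg[OF g1] deg_ge_min[OF g1 bV] by simp
      moreover note al[OF bd] dec[OF SV(1), of a b, unfolded r1] dec[OF VS, of a b, unfolded r2] a(2) kk
      ultimately show False by linarith
    qed
    have argC: False if a: "a \<in> fst ` S" "a \<notin> X1" and kk: "k2 + int (max_deg V1 E1) \<le> k" for a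
    proof -
      define R where "R = {y. (a,y)\<in>S}"
      have aV: "a \<in> V1" using a SV unfolding V_def by auto
      have "R \<subseteq> X2" using a S(2) unfolding R_def X_def by auto
      then have "\<not> off_alliance V2 E2 k2 R" using X2(1) unfolding oaf_def by blast
      moreover have "R \<subseteq> V2" "R \<noteq> {}" using SV a unfolding R_def V_def by force+
      ultimately obtain b where b: "b \<in> boundary V2 E2 R" "int (deltaS E2 R b) < int (deltaS E2 (V2 - R) b) + k2"
        unfolding off_alliance_def by force
      then obtain b' where b': "b' \<in> R" "E2 b' b" "b \<in> V2" "b \<notin> R" unfolding boundary_def by auto
      have bd: "(a,b) \<in> boundary V CE S" unfolding boundary_def V_def CE_def cart_edge_def
        using b' aV unfolding R_def by (auto intro!: bexI[of _ "(a,b')"])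
      have r2: "{y. (a,y)\<in>V-S} = V2 - R" using aV unfolding V_def R_def by auto
      have cV: "{x. (x,b)\<in>S} \<subseteq> V1" using SV unfolding V_def by auto
      have "deltaS E1 {x. (x,b)\<in>S} a \<le> max_deg V1 E1"
        using delta_le_deg[OF g1 cV, of a] deg_le_max[OF g1 aV] by linarith
      moreover note al[OF bd] dec[OF SV(1), of a b] dec[OF VS, of a b, unfolded r2] b(2) kk
      ultimately show False unfolding R_def by linarith
    qed
    have argD: False if a: "b \<in> snd ` S" "b \<notin> X2" and kk: "k1 + int (max_deg V2 E2) \<le> k" for b
    proof -
      define R where "R = {x. (x,b)\<in>S}"
      have aV: "b \<in> V2" using a SV unfolding V_def by auto
      have "R \<subseteq> X1" using a S(2) unfolding R_def X_def by auto
      then have "\<not> off_alliance V1 E1 k1 R" using X1(1) unfolding oaf_def by blast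
      moreover have "R \<subseteq> V1" "R \<noteq> {}" using SV a unfolding R_def V_def by force+
      ultimately obtain c where b: "c \<in> boundary V1 E1 R" "int (deltaS E1 R c) < int (deltaS E1 (V1 - R) c) + k1"
        unfolding off_alliance_def by force
      then obtain c' where b': "c' \<in> R" "E1 c' c" "c \<in> V1" "c \<notin> R" unfolding boundary_def by auto
      have bd: "(c,b) \<in> boundary V CE S" unfolding boundary_def V_def CE_def cart_edge_def
        using b' aV unfolding R_def by (auto intro!: bexI[of _ "(c',b)"])
      have r2: "{x. (x,b)\<in>V-S} = V1 - R" using aV unfolding V_def R_def by auto
      have cV: "{y. (c,y)\<in>S} \<subseteq> V2" using SV unfolding V_def by auto
      have "deltaS E2 {y. (c,y)\<in>S} b \<le> max_deg V2 E2"
        using delta_le_deg[OF g2 cV, of b] deg_le_max[OF g2 aV] by linarith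
      moreover note al[OF bd] dec[OF SV(1), of c b] dec[OF VS, of c b, unfolded r2] b(2) kk
      ultimately show False unfolding R_def by linarith
    qed
    show False
    proof (cases "k2 + int (max_deg V1 E1) \<le> k")
      case True
      show False
      proof (cases "fst ` S \<subseteq> X1")
        case True then show False using argA[OF _ kA] by blast
      next
        case False then obtain a where "a \<in> fst ` S" "a \<notin> X1" by blast
        then show False using argC \<open>k2 + int (max_deg V1 E1) \<le> k\<close> by blast
      qed
    next
      case F: False
      then have kk: "k1 + int (max_deg V2 E2) \<le> k" using klo by (simp add: max_def min_def split: if_splits)
      show False
      proof (cases "snd ` S \<subseteq> X2")
        case True then show False using argB[OF _ kB] by blast
      next
        case False then obtain b where "b \<in> snd ` S" "b \<notin> X2" by blast
        then show False using argD kk by blast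
      qed
    qed
  qed
  have XV: "X \<subseteq> V" unfolding X_def V_def using X1V X2V by auto
  have oX: "oaf V CE k X" unfolding oaf_def using XV noall by blast
  have fa: "finite (X1 \<times> V2)" "finite (V1 \<times> X2)"
    using finite_subset[OF X1V f1] finite_subset[OF X2V f2] f1 f2 by auto
  have ie: "X1 \<times> V2 \<inter> V1 \<times> X2 = X1 \<times> X2" using X1V X2V by auto
  have cu: "card (X1 \<times> V2) + card (V1 \<times> X2) = card X + card (X1 \<times> X2)"
    unfolding X_def using card_Un_Int[OF fa] ie by simp
  have h1: "int (card (X1 \<times> V2)) = int (card V2) * int (phi_o V1 E1 k1)"
    using X1(2) by (simp add: card_cartesian_product)
  have h2: "int (card (V1 \<times> X2)) = int (card V1) * int (phi_o V2 E2 k2)"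
    using X2(2) by (simp add: card_cartesian_product)
  have h3: "int (card (X1 \<times> X2)) = int (phi_o V1 E1 k1) * int (phi_o V2 E2 k2)"
    using X1(2) X2(2) by (simp add: card_cartesian_product)
  have cu': "int (card (X1 \<times> V2)) + int (card (V1 \<times> X2)) = int (card X) + int (card (X1 \<times> X2))"
    using cu by linarith
  have "int (card X) \<le> int (phi_o (V1 \<times> V2) (cart_edge E1 E2) k)"
    using phi_ge[OF fV oX] unfolding V_def CE_def by simp
  then show ?thesis using cu' h1 h2 h3 by linarith
qed

end
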